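(* Let $(R,\mathfrak{m})$ be a Noetherian local ring, $M$ a finitely generated $R$-module, $S \subseteq M$ a subset, and $\mathscr{E}$ an $R$-submodule of $\mathrm{Hom}_R(M,R)$. Let $I^{\mathscr{E}}(S,M) := \{y \in \langle S \rangle \mid f(y) \in \mathfrak{m} \text{ for all } f \in \mathscr{E}\}$, an $R$-submodule of $\langle S\rangle$. Then $\delta^{\mathscr{E}}_\mathfrak{m}(S,M) = \lambda_R(\langle S\rangle / I^{\mathscr{E}}(S,M))$, where $\lambda_R$ denotes length.
   Context: $\langle S\rangle$ is the submodule generated by $S$. A free $\mathscr{E}$-summand of $M$ is a direct summand $F$ (with complement $G$) of $M$, $F \cong R^n$, such that each coordinate of the projection $M \to F \cong R^n$ along $G$ lies in $\mathscr{E}$. $\delta^{\mathscr{E}}_\mathfrak{m}(S,M)$ is the largest integer $n\ge 0$ such that there is a free $\mathscr{E}$-summand of $M$ of rank $n$ contained in $\langle S\rangle$. *)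

theory Defs
  imports Main "HOL-Library.Extended_Nat"
begin

definition ring_ideal :: "'r::comm_ring_1 set \<Rightarrow> bool" where
  "ring_ideal I \<longleftrightarrow> module.subspace ((*) :: 'r \<Rightarrow> 'r \<Rightarrow> 'r) I"

definition maximal_ideal :: "'r::comm_ring_1 set \<Rightarrow> bool" where
  "maximal_ideal I \<longleftrightarrow> ring_ideal I \<and> I \<noteq> UNIV \<and>
     (\<forall>J. ring_ideal J \<and> I \<subseteq> J \<and> J \<noteq> UNIV \<longrightarrow> J = I)"

definition noetherian_ring :: "'r::comm_ring_1 itself \<Rightarrow> bool" where
  "noetherian_ring _ \<longleftrightarrow> (\<forall>I::'r set. ring_ideal I \<longrightarrow>
     (\<exists>A. finite A \<and> I = module.span ((*) :: 'r \<Rightarrow> 'r \<Rightarrow> 'r) A))"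

definition noetherian_local_ring :: "'r::comm_ring_1 set \<Rightarrow> bool" where
  "noetherian_local_ring mm \<longleftrightarrow> noetherian_ring TYPE('r) \<and> maximal_ideal mm \<and>
     (\<forall>J. maximal_ideal J \<longrightarrow> J = mm)"

definition fin_gen_module :: "('r::comm_ring_1 \<Rightarrow> 'm::ab_group_add \<Rightarrow> 'm) \<Rightarrow> bool" where
  "fin_gen_module s \<longleftrightarrow> (\<exists>A. finite A \<and> module.span s A = UNIV)"

definition dual_submodule ::
  "('r::comm_ring_1 \<Rightarrow> 'm::ab_group_add \<Rightarrow> 'm) \<Rightarrow> ('m \<Rightarrow> 'r) set \<Rightarrow> bool" where
  "dual_submodule s E \<longleftrightarrow> E \<subseteq> {f. module_hom s (*) f} \<and> (\<lambda>x. 0) \<in> E \<and>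
     (\<forall>f\<in>E. \<forall>g\<in>E. (\<lambda>x. f x + g x) \<in> E) \<and> (\<forall>c. \<forall>f\<in>E. (\<lambda>x. c * f x) \<in> E)"

definition proj_along :: "'m::ab_group_add set \<Rightarrow> 'm set \<Rightarrow> 'm \<Rightarrow> 'm" where
  "proj_along F G x = (THE p. p \<in> F \<and> x - p \<in> G)"

text \<open>R^n, realised as functions nat => R vanishing outside {..<n}.\<close>
definition free_mod :: "nat \<Rightarrow> (nat \<Rightarrow> 'r::comm_ring_1) set" where
  "free_mod n = {v. \<forall>i\<ge>n. v i = 0}"

definition free_E_summand ::
  "('r::comm_ring_1 \<Rightarrow> 'm::ab_group_add \<Rightarrow> 'm) \<Rightarrow> ('m \<Rightarrow> 'r) set \<Rightarrow> 'm set \<Rightarrow> nat \<Rightarrow> bool" where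
  "free_E_summand s E F n \<longleftrightarrow>
     (\<exists>G (\<phi> :: 'm \<Rightarrow> nat \<Rightarrow> 'r).
        module.subspace s F \<and> module.subspace s G \<and>
        (\<forall>x. \<exists>a\<in>F. \<exists>b\<in>G. x = a + b) \<and> F \<inter> G = {0} \<and>
        (\<forall>x\<in>F. \<forall>y\<in>F. \<phi> (x + y) = (\<lambda>i. \<phi> x i + \<phi> y i)) \<and>
        (\<forall>c. \<forall>x\<in>F. \<phi> (s c x) = (\<lambda>i. c * \<phi> x i)) \<and>
        bij_betw \<phi> F (free_mod n) \<and>
        (\<forall>i<n. (\<lambda>x. \<phi> (proj_along F G x) i) \<in> E))"

definition delta_E ::
  "('r::comm_ring_1 \<Rightarrow> 'm::ab_group_add \<Rightarrow> 'm) \<Rightarrow> ('m \<Rightarrow> 'r) set \<Rightarrow> 'm set \<Rightarrow> nat" where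
  "delta_E s E S = (GREATEST n. \<exists>F. free_E_summand s E F n \<and> F \<subseteq> module.span s S)"

definition I_E ::
  "('r::comm_ring_1 \<Rightarrow> 'm::ab_group_add \<Rightarrow> 'm) \<Rightarrow> 'r set \<Rightarrow> ('m \<Rightarrow> 'r) set \<Rightarrow> 'm set \<Rightarrow> 'm set" where
  "I_E s mm E S = {y \<in> module.span s S. \<forall>f\<in>E. f y \<in> mm}"

text \<open>Length of the quotient module N/I (I \<subseteq> N submodules of M): supremum of the lengths
  of strict chains of submodules I = c 0 \<subset> ... \<subset> c k = N (submodules of N/I correspond
  to submodules of M between I and N).\<close>
definition quot_length ::
  "('r::comm_ring_1 \<Rightarrow> 'm::ab_group_add \<Rightarrow> 'm) \<Rightarrow> 'm set \<Rightarrow> 'm set \<Rightarrow> enat" where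
  "quot_length s N I = (SUP k \<in> {k. \<exists>c :: nat \<Rightarrow> 'm set. c 0 = I \<and> c k = N \<and>
       (\<forall>i\<le>k. module.subspace s (c i)) \<and> (\<forall>i<k. c i \<subset> c (Suc i))}. enat k)"

end

theory Submission
  imports Defs
begin


lemma rmod: "module ((*) :: 'r::comm_ring_1 \<Rightarrow> 'r \<Rightarrow> 'r)"
  by unfold_locales (auto simp: algebra_simps)

lemma ring_ideal_iff: "ring_ideal (I::'r::comm_ring_1 set) \<longleftrightarrow>
   0 \<in> I \<and> (\<forall>x\<in>I. \<forall>y\<in>I. x + y \<in> I) \<and> (\<forall>c. \<forall>x\<in>I. c * x \<in> I)"
  unfolding ring_ideal_def module.subspace_def[OF rmod] ..

lemma idealD: assumes "ring_ideal (I::'r::comm_ring_1 set)"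
  shows "0 \<in> I" "x \<in> I \<Longrightarrow> y \<in> I \<Longrightarrow> x + y \<in> I" "x \<in> I \<Longrightarrow> c * x \<in> I"
  using assms unfolding ring_ideal_iff by blast+

lemma ideal_one: "ring_ideal (I::'r::comm_ring_1 set) \<Longrightarrow> 1 \<in> I \<Longrightarrow> I = UNIV"
  unfolding ring_ideal_iff by (metis UNIV_eq_I mult.right_neutral)

locale lring =
  fixes mm :: "'r::comm_ring_1 set"
  assumes loc: "noetherian_local_ring mm"
begin

lemma mm_max: "maximal_ideal mm" using loc unfolding noetherian_local_ring_def by blast
lemma mm_ideal: "ring_ideal mm" using mm_max unfolding maximal_ideal_def by blast
lemma mm_zero: "0 \<in> mm" using mm_ideal unfolding ring_ideal_iff by blast
lemma mm_add: "x \<in> mm \<Longrightarrow> y \<in> mm \<Longrightarrow> x + y \<in> mm" using mm_ideal unfolding ring_ideal_iff by blast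
lemma mm_mult: "x \<in> mm \<Longrightarrow> c * x \<in> mm" using mm_ideal unfolding ring_ideal_iff by blast
lemma mm_mult2: "x \<in> mm \<Longrightarrow> x * c \<in> mm" using mm_mult by (metis mult.commute)
lemma mm_neg: "x \<in> mm \<Longrightarrow> - x \<in> mm" using mm_mult[of x "-1"] by simp
lemma mm_diff: "x \<in> mm \<Longrightarrow> y \<in> mm \<Longrightarrow> x - y \<in> mm" using mm_add mm_neg by fastforce
lemma one_notin: "1 \<notin> mm" using mm_max ideal_one mm_ideal unfolding maximal_ideal_def by blast
lemma mm_sum: "finite A \<Longrightarrow> (\<And>i. i \<in> A \<Longrightarrow> g i \<in> mm) \<Longrightarrow> sum g A \<in> mm"
  by (induction A rule: finite_induct) (auto intro: mm_add mm_zero)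

lemma unit: assumes "x \<notin> mm" shows "\<exists>y. x * y = 1"
proof (rule ccontr)
  assume nu: "\<not> (\<exists>y. x * y = 1)"
  define J0 where "J0 = range (\<lambda>r. x * r)"
  have J0i: "ring_ideal J0" unfolding ring_ideal_iff
  proof (intro conjI ballI allI)
    show "0 \<in> J0" unfolding J0_def by (metis mult_zero_right rangeI)
    fix a b c assume "a \<in> J0" "b \<in> J0"
    then obtain r t where "a = x * r" "b = x * t" unfolding J0_def by blast
    then show "a + b \<in> J0" "c * a \<in> J0" unfolding J0_def
      by (simp_all add: distrib_left[symmetric] mult.left_commute[of c x r])
  qed
  have J01: "1 \<notin> J0" using nu unfolding J0_def by auto
  define A where "A = {J. ring_ideal J \<and> J0 \<subseteq> J \<and> (1::'r) \<notin> J}"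
  have "\<forall>C\<in>chains A. \<exists>U\<in>A. \<forall>X\<in>C. X \<subseteq> U"
  proof
    fix C assume C: "C \<in> chains A"
    show "\<exists>U\<in>A. \<forall>X\<in>C. X \<subseteq> U"
    proof (cases "C = {}")
      case True then show ?thesis using J0i J01 unfolding A_def by auto
    next
      case False
      have CA: "\<And>X. X \<in> C \<Longrightarrow> ring_ideal X \<and> J0 \<subseteq> X \<and> (1::'r) \<notin> X"
        using chainsD2[OF C] unfolding A_def by blast
      have "ring_ideal (\<Union>C)" unfolding ring_ideal_iff
      proof (intro conjI ballI allI)
        obtain X where "X \<in> C" using False by blast
        then show "0 \<in> \<Union>C" using CA idealD(1) by blast
      next
        fix a b assume "a \<in> \<Union>C" "b \<in> \<Union>C"
        then obtain X Y where XY: "X \<in> C" "Y \<in> C" "a \<in> X" "b \<in> Y" by blast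
        from chainsD[OF C XY(1,2)] show "a + b \<in> \<Union>C"
        proof
          assume "X \<subseteq> Y" then have "a + b \<in> Y" using XY CA idealD(2) by blast
          then show ?thesis using XY by blast
        next
          assume "Y \<subseteq> X" then have "a + b \<in> X" using XY CA idealD(2) by blast
          then show ?thesis using XY by blast
        qed
      next
        fix c a assume "a \<in> \<Union>C"
        then obtain X where "X \<in> C" "a \<in> X" by blast
        then have "c * a \<in> X" using CA idealD(3) by blast
        then show "c * a \<in> \<Union>C" using \<open>X \<in> C\<close> by blast
      qed
      moreover have "J0 \<subseteq> \<Union>C" using False CA by blast
      moreover have "1 \<notin> \<Union>C" using CA by blast
      moreover have "\<forall>X\<in>C. X \<subseteq> \<Union>C" by blast
      ultimately show ?thesis unfolding A_def by blast
    qed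
  qed
  from Zorn_Lemma2[OF this] obtain M where M: "M \<in> A" "\<forall>X\<in>A. M \<subseteq> X \<longrightarrow> X = M" by blast
  have MA: "ring_ideal M" "J0 \<subseteq> M" "1 \<notin> M" using M(1) unfolding A_def by blast+
  have "maximal_ideal M" unfolding maximal_ideal_def
  proof (intro conjI allI impI)
    show "ring_ideal M" by (rule MA(1))
    show "M \<noteq> UNIV" using MA(3) by blast
  next
    fix J assume J: "ring_ideal J \<and> M \<subseteq> J \<and> J \<noteq> UNIV"
    then have "1 \<notin> J" using ideal_one by blast
    then have "J \<in> A" using J MA(2) unfolding A_def by blast
    then show "J = M" using M(2) J by blast
  qed
  then have "M = mm" using loc unfolding noetherian_local_ring_def by blast
  moreover have "x \<in> J0" unfolding J0_def by (metis mult.right_neutral rangeI)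
  ultimately show False using MA(2) assms by blast
qed

end



lemma proj_along_eq:
  assumes "module s" "module.subspace s F" "module.subspace s G" "F \<inter> G = {0}"
    "p \<in> F" "x - p \<in> G"
  shows "proj_along F G x = p"
  unfolding proj_along_def
proof (rule the_equality)
  show "p \<in> F \<and> x - p \<in> G" using assms by blast
next
  fix q assume q: "q \<in> F \<and> x - q \<in> G"
  interpret module s by fact
  have "q - p \<in> F" using q assms subspace_diff by blast
  moreover have "(x - p) - (x - q) \<in> G" using q assms subspace_diff by blast
  moreover have "(x - p) - (x - q) = q - p" by simp
  ultimately have "q - p \<in> F \<inter> G" by auto
  then show "q = p" using assms(4) by auto
qed

locale lrmod = lring mm + module s
  for mm :: "'r::comm_ring_1 set" and s :: "'r \<Rightarrow> 'm::ab_group_add \<Rightarrow> 'm" +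
  fixes E :: "('m \<Rightarrow> 'r) set" and S :: "'m set"
  assumes dE: "dual_submodule s E"
begin

lemma E_hom: "f \<in> E \<Longrightarrow> module_hom s (*) f"
  using dE unfolding dual_submodule_def by blast
lemma E_scale: "f \<in> E \<Longrightarrow> (\<lambda>x. c * f x) \<in> E"
  using dE unfolding dual_submodule_def by blast

lemma hom_add: "module_hom s (*) f \<Longrightarrow> f (x + y) = f x + f y"
  by (simp add: module_hom_iff)
lemma hom_scale: "module_hom s (*) f \<Longrightarrow> f (s c x) = c * f x"
  by (simp add: module_hom_iff)
lemma hom_diff: "module_hom s (*) f \<Longrightarrow> f (x - y) = f x - f y"
  by (rule module_hom.diff)
lemma hom_sum_scale: "module_hom s (*) h \<Longrightarrow>
    h (\<Sum>i<n. s (c i) (e i)) = (\<Sum>i<n. c i * h (e i))"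
  by (simp add: module_hom.sum hom_scale)

lemma hom_mm_subspace: "module_hom s (*) f \<Longrightarrow> subspace {x. f x \<in> mm}"
  using module_hom.subspace_linear_preimage[of s "(*)" f mm] mm_ideal
  unfolding ring_ideal_def by blast

definition dualp :: "nat \<Rightarrow> (nat \<Rightarrow> 'm) \<Rightarrow> (nat \<Rightarrow> 'm \<Rightarrow> 'r) \<Rightarrow> 'm set \<Rightarrow> bool" where
  "dualp n e f N \<longleftrightarrow> (\<forall>j<n. e j \<in> N) \<and> (\<forall>i<n. f i \<in> E) \<and>
     (\<forall>i<n. \<forall>j<n. f i (e j) = (if i = j then 1 else 0))"

lemma dual_sum:
  assumes "dualp n e f N" "k < n"
  shows "f k (\<Sum>i<n. s (c i) (e i)) = c k"
proof -
  have h: "module_hom s (*) (f k)" using assms E_hom unfolding dualp_def by blast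
  have "f k (\<Sum>i<n. s (c i) (e i)) = (\<Sum>i<n. c i * f k (e i))" by (rule hom_sum_scale[OF h])
  also have "\<dots> = (\<Sum>i<n. if k = i then c i else 0)"
    using assms unfolding dualp_def by (intro sum.cong) auto
  also have "\<dots> = c k" using assms(2) by simp
  finally show ?thesis .
qed

lemma L1:
  assumes d: "dualp n e f N"
  shows "free_E_summand s E (span (e ` {..<n})) n"
proof -
  define F where "F = span (e ` {..<n})"
  define G where "G = {x. \<forall>i<n. f i x = 0}"
  define \<phi> where "\<phi> = (\<lambda>x. \<lambda>i. if i < n then f i x else (0::'r))"
  define p where "p = (\<lambda>x. \<Sum>i<n. s (f i x) (e i))"
  have fE: "\<And>i. i < n \<Longrightarrow> f i \<in> E" using d unfolding dualp_def by blast
  have fh: "\<And>i. i < n \<Longrightarrow> module_hom s (*) (f i)" using fE E_hom by blast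
  have fp: "\<And>k x. k < n \<Longrightarrow> f k (p x) = f k x" unfolding p_def using dual_sum[OF d, of _ "\<lambda>i. f i x" for x] by simp
  have pF: "\<And>x. p x \<in> F" unfolding p_def F_def
    by (intro span_sum span_scale span_base) auto
  have sF: "subspace F" unfolding F_def by simp
  have sG: "subspace G" unfolding G_def
  proof (rule subspaceI)
    show "0 \<in> {x. \<forall>i<n. f i x = 0}" by (auto simp: module_hom.zero[OF fh])
  next
    fix x y assume "x \<in> {x. \<forall>i<n. f i x = 0}" "y \<in> {x. \<forall>i<n. f i x = 0}"
    then show "x + y \<in> {x. \<forall>i<n. f i x = 0}" by (auto simp: hom_add[OF fh])
  next
    fix c x assume "x \<in> {x. \<forall>i<n. f i x = 0}"
    then show "s c x \<in> {x. \<forall>i<n. f i x = 0}" by (auto simp: hom_scale[OF fh])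
  qed
  have xpG: "\<And>x. x - p x \<in> G" unfolding G_def by (auto simp: hom_diff[OF fh] fp)
  interpret mp: module_pair s s by (simp add: module_pair_def module_axioms)
  have ph: "module_hom s s p" unfolding p_def
    by (rule mp.module_hom_sum) (auto intro: mp.module_hom_compose_scale fh simp: module_axioms)
  have "module_hom s s (\<lambda>x. p x - x)"
    using mp.module_hom_sub[OF ph module_hom_ident] by simp
  then have "subspace {x. p x - x = 0}" using module_hom.subspace_kernel by blast
  moreover have "e ` {..<n} \<subseteq> {x. p x - x = 0}"
  proof
    fix y assume "y \<in> e ` {..<n}"
    then obtain j where j: "j < n" "y = e j" by blast
    have "p (e j) = (\<Sum>i<n. s (if i = j then 1 else 0) (e i))"
      unfolding p_def using d j(1) unfolding dualp_def by (intro sum.cong) auto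
    also have "\<dots> = (\<Sum>i<n. if i = j then e i else 0)" by (intro sum.cong) auto
    also have "\<dots> = e j" using j(1) by simp
    finally show "y \<in> {x. p x - x = 0}" using j by simp
  qed
  ultimately have "F \<subseteq> {x. p x - x = 0}" unfolding F_def by (intro span_minimal)
  then have Fp: "\<And>x. x \<in> F \<Longrightarrow> p x = x" by auto
  have FG: "F \<inter> G = {0}"
  proof
    show "F \<inter> G \<subseteq> {0}"
    proof
      fix x assume x: "x \<in> F \<inter> G"
      then have "x = p x" using Fp by simp
      also have "\<dots> = 0" unfolding p_def using x unfolding G_def by simp
      finally show "x \<in> {0}" by simp
    qed
    show "{0} \<subseteq> F \<inter> G" using sF sG subspace_0 by blast
  qed
  have proj: "\<And>x. proj_along F G x = p x"
    by (rule proj_along_eq[OF module_axioms sF sG FG pF xpG])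
  have "bij_betw \<phi> F (free_mod n)"
  proof (rule bij_betw_imageI)
    show "inj_on \<phi> F"
    proof
      fix x y assume xy: "x \<in> F" "y \<in> F" "\<phi> x = \<phi> y"
      have "\<And>i. i < n \<Longrightarrow> f i x = f i y" 
      proof -
        fix i assume i: "i < n"
        have "\<phi> x i = \<phi> y i" using xy(3) by simp
        then show "f i x = f i y" using i unfolding \<phi>_def by simp
      qed
      then have "p x = p y" unfolding p_def by simp
      moreover have "p x = x" "p y = y" using Fp xy(1,2) by auto
      ultimately show "x = y" by simp
    qed
    show "\<phi> ` F = free_mod n"
    proof
      show "\<phi> ` F \<subseteq> free_mod n" unfolding \<phi>_def free_mod_def by auto
      show "free_mod n \<subseteq> \<phi> ` F"
      proof
        fix v :: "nat \<Rightarrow> 'r" assume v: "v \<in> free_mod n"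
        define x where "x = (\<Sum>i<n. s (v i) (e i))"
        have "x \<in> F" unfolding x_def F_def by (intro span_sum span_scale span_base) auto
        moreover have "\<phi> x = v"
        proof
          fix i show "\<phi> x i = v i"
            using v unfolding \<phi>_def x_def free_mod_def by (auto simp: dual_sum[OF d])
        qed
        ultimately show "v \<in> \<phi> ` F" by blast
      qed
    qed
  qed
  moreover have "\<forall>i<n. (\<lambda>x. \<phi> (proj_along F G x) i) \<in> E"
  proof (intro allI impI)
    fix i assume i: "i < n"
    have "(\<lambda>x. \<phi> (proj_along F G x) i) = f i"
      using i fp unfolding proj \<phi>_def by auto
    then show "(\<lambda>x. \<phi> (proj_along F G x) i) \<in> E" using fE i by simp
  qed
  moreover have "\<forall>x\<in>F. \<forall>y\<in>F. \<phi> (x + y) = (\<lambda>i. \<phi> x i + \<phi> y i)"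
    unfolding \<phi>_def by (auto simp: hom_add[OF fh])
  moreover have "\<forall>c. \<forall>x\<in>F. \<phi> (s c x) = (\<lambda>i. c * \<phi> x i)"
    unfolding \<phi>_def by (auto simp: hom_scale[OF fh])
  moreover have "\<forall>x. \<exists>a\<in>F. \<exists>b\<in>G. x = a + b"
  proof
    fix x show "\<exists>a\<in>F. \<exists>b\<in>G. x = a + b"
      by (rule bexI[of _ "p x"], rule bexI[of _ "x - p x"]) (auto simp: pF xpG)
  qed
  ultimately show ?thesis unfolding free_E_summand_def F_def[symmetric]
    apply (intro exI[of _ G] exI[of _ \<phi>])
    using sF sG FG by blast
qed

lemma L2:
  assumes "free_E_summand s E F n"
  shows "\<exists>e f. dualp n e f F"
proof -
  obtain G \<phi> where H: "subspace F" "subspace G" "F \<inter> G = {0}"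
    "bij_betw \<phi> F (free_mod n)" "\<forall>i<n. (\<lambda>x. \<phi> (proj_along F G x) i) \<in> E"
    using assms unfolding free_E_summand_def by blast
  define e where "e = (\<lambda>j. inv_into F \<phi> (\<lambda>i. if i = j then 1 else 0))"
  define f where "f = (\<lambda>i x. \<phi> (proj_along F G x) i)"
  have ej: "\<And>j. j < n \<Longrightarrow> e j \<in> F \<and> \<phi> (e j) = (\<lambda>i. if i = j then 1 else 0)"
  proof -
    fix j assume j: "j < n"
    have "(\<lambda>i. if i = j then (1::'r) else 0) \<in> free_mod n" unfolding free_mod_def using j by auto
    then have "(\<lambda>i. if i = j then (1::'r) else 0) \<in> \<phi> ` F" using H(4) bij_betw_imp_surj_on by blast
    then show "e j \<in> F \<and> \<phi> (e j) = (\<lambda>i. if i = j then 1 else 0)"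
      unfolding e_def by (simp add: inv_into_into f_inv_into_f)
  qed
  have "dualp n e f F" unfolding dualp_def
  proof (intro conjI allI impI)
    fix j assume "j < n" then show "e j \<in> F" using ej by blast
  next
    fix i assume "i < n" then show "f i \<in> E" using H(5) unfolding f_def by blast
  next
    fix i j assume ij: "i < n" "j < n"
    have "proj_along F G (e j) = e j"
      by (rule proj_along_eq[OF module_axioms H(1-3)]) (use ej ij H(2) subspace_0 in auto)
    then show "f i (e j) = (if i = j then 1 else 0)" unfolding f_def using ej ij by auto
  qed
  then show ?thesis by blast
qed

end


context lrmod begin

lemma L3:
  assumes "finite A" "\<forall>j<n. e j \<in> span A" "\<forall>i<n. module_hom s (*) (f i)"
    "\<forall>i<n. \<forall>j<n. f i (e j) = (if i = j then 1 else 0)"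
  shows "n \<le> card A"
  using assms
proof (induction n arbitrary: A)
  case 0 show ?case by simp
next
  case (Suc n)
  have hn: "module_hom s (*) (f n)" using Suc.prems(3) by simp
  have en: "e n \<in> span A" using Suc.prems(2) by simp
  have fen: "f n (e n) = 1" using Suc.prems(4) by simp
  obtain a0 where a0: "a0 \<in> A" "f n a0 \<notin> mm"
  proof (rule ccontr)
    assume "\<not> thesis"
    then have "A \<subseteq> {x. f n x \<in> mm}" using that by blast
    then have "span A \<subseteq> {x. f n x \<in> mm}" by (intro span_minimal hom_mm_subspace[OF hn])
    then show False using en fen one_notin by auto
  qed
  obtain u where u: "f n a0 * u = 1" using unit[OF a0(2)] by blast
  define \<pi> where "\<pi> = (\<lambda>x. x - s (u * f n x) a0)"
  have \<pi>h: "module_hom s s \<pi>" unfolding module_hom_iff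
  proof (intro conjI allI)
    show "module s" "module s" by (rule module_axioms)+
  next
    fix x y show "\<pi> (x + y) = \<pi> x + \<pi> y"
      unfolding \<pi>_def by (simp add: hom_add[OF hn] distrib_left scale_left_distrib)
  next
    fix c x show "\<pi> (s c x) = s c (\<pi> x)"
      unfolding \<pi>_def by (simp add: hom_scale[OF hn] scale_right_diff_distrib mult.left_commute)
  qed
  have \<pi>0: "\<pi> a0 = 0" unfolding \<pi>_def using u by (simp add: mult.commute)
  define A' where "A' = \<pi> ` (A - {a0})"
  have finA': "finite A'" unfolding A'_def using Suc.prems(1) by simp
  have "\<pi> ` A \<subseteq> span A'"
  proof
    fix y assume "y \<in> \<pi> ` A"
    then obtain a where a: "a \<in> A" "y = \<pi> a" by blast
    show "y \<in> span A'"
    proof (cases "a = a0")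
      case True then show ?thesis using a \<pi>0 span_zero by simp
    next
      case False then have "y \<in> A'" unfolding A'_def using a by blast
      then show ?thesis using span_base by blast
    qed
  qed
  then have sub: "span (\<pi> ` A) \<subseteq> span A'" by (intro span_minimal) auto
  have ej: "\<forall>j<n. e j \<in> span A'"
  proof (intro allI impI)
    fix j assume j: "j < n"
    have "f n (e j) = 0" using Suc.prems(4) j by simp
    then have "\<pi> (e j) = e j" unfolding \<pi>_def by simp
    moreover have "e j \<in> span A" using Suc.prems(2) j by simp
    ultimately have "e j \<in> \<pi> ` span A" by (metis imageI)
    then have "e j \<in> span (\<pi> ` A)" using module_hom.span_image[OF \<pi>h] by simp
    then show "e j \<in> span A'" using sub by blast
  qed
  have "n \<le> card A'"
    by (rule Suc.IH[OF finA' ej]) (use Suc.prems(3,4) in simp_all)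
  moreover have "card A' \<le> card (A - {a0})" unfolding A'_def by (rule card_image_le) (use Suc.prems(1) in simp)
  moreover have "card (A - {a0}) = card A - 1" using a0(1) Suc.prems(1) by simp
  moreover have "card A \<ge> 1" using a0(1) Suc.prems(1) by (metis One_nat_def Suc_leI card_gt_0_iff empty_iff)
  ultimately show ?case by linarith
qed

end


context lrmod begin

abbreviation IE where "IE \<equiv> I_E s mm E S"

lemma memIE: "y \<in> IE \<longleftrightarrow> y \<in> span S \<and> (\<forall>f\<in>E. f y \<in> mm)"
  by (simp add: I_E_def)

lemma IE_N: "IE \<subseteq> span S" by (auto simp: memIE)

lemma IE_sub: "subspace IE"
proof (rule subspaceI)
  show "0 \<in> IE" unfolding memIE using E_hom module_hom.zero mm_zero span_zero by metis
next
  fix x y assume "x \<in> IE" "y \<in> IE"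
  then show "x + y \<in> IE" unfolding memIE by (auto simp: hom_add[OF E_hom] intro: mm_add span_add)
next
  fix c x assume "x \<in> IE"
  then show "s c x \<in> IE" unfolding memIE by (auto simp: hom_scale[OF E_hom] intro: mm_mult span_scale)
qed

lemma mmN: "a \<in> mm \<Longrightarrow> y \<in> span S \<Longrightarrow> s a y \<in> IE"
  unfolding memIE by (auto simp: hom_scale[OF E_hom] intro: mm_mult2 span_scale)

definition indep :: "nat \<Rightarrow> (nat \<Rightarrow> 'm) \<Rightarrow> bool" where
  "indep k x \<longleftrightarrow> (\<forall>a. (\<Sum>i<k. s (a i) (x i)) \<in> IE \<longrightarrow> (\<forall>i<k. a i \<in> mm))"

lemma L4:
  assumes "\<forall>i<k. x i \<in> span S" "indep k x"
  shows "\<exists>e f. dualp k e f (span S) \<and> (\<forall>j<k. e j \<in> span (x ` {..<k}))"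
  using assms
proof (induction k arbitrary: x)
  case 0 show ?case by (simp add: dualp_def)
next
  case (Suc k)
  have xN: "\<And>i. i < Suc k \<Longrightarrow> x i \<in> span S" using Suc.prems(1) by blast
  have "x k \<notin> IE"
  proof
    assume xI: "x k \<in> IE"
    define a where "a = (\<lambda>i. if i = k then (1::'r) else 0)"
    have "(\<Sum>i<Suc k. s (a i) (x i)) = (\<Sum>i<Suc k. if i = k then x i else 0)"
      by (intro sum.cong) (auto simp: a_def)
    also have "\<dots> = x k" by simp
    finally have "(\<Sum>i<Suc k. s (a i) (x i)) \<in> IE" using xI by simp
    then have "a k \<in> mm" using Suc.prems(2) unfolding indep_def by blast
    then show False using one_notin unfolding a_def by simp
  qed
  then obtain g0 where g0: "g0 \<in> E" "g0 (x k) \<notin> mm" using xN[of k] unfolding memIE by blast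
  obtain u where u: "g0 (x k) * u = 1" using unit[OF g0(2)] by blast
  define g where "g = (\<lambda>y. u * g0 y)"
  have gE: "g \<in> E" unfolding g_def using E_scale[OF g0(1)] .
  have gh: "module_hom s (*) g" using E_hom[OF gE] .
  have gxk: "g (x k) = 1" unfolding g_def using u by (simp add: mult.commute)
  define x' where "x' = (\<lambda>i. x i - s (g (x i)) (x k))"
  have x'N: "\<forall>i<k. x' i \<in> span S" unfolding x'_def using xN by (auto intro!: span_diff span_scale)
  have x'ind: "indep k x'" unfolding indep_def
  proof (rule allI, rule impI)
    fix a assume aI: "(\<Sum>i<k. s (a i) (x' i)) \<in> IE"
    define b where "b = (\<lambda>i. if i < k then a i else - (\<Sum>i<k. a i * g (x i)))"
    have "(\<Sum>i<k. s (a i) (x' i)) = (\<Sum>i<k. s (a i) (x i) - s (a i * g (x i)) (x k))"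
      unfolding x'_def by (intro sum.cong) (auto simp: scale_right_diff_distrib)
    also have "\<dots> = (\<Sum>i<k. s (a i) (x i)) - (\<Sum>i<k. s (a i * g (x i)) (x k))"
      by (rule sum_subtractf)
    also have "(\<Sum>i<k. s (a i * g (x i)) (x k)) = s (\<Sum>i<k. a i * g (x i)) (x k)"
      by (rule scale_sum_left[symmetric])
    also have "(\<Sum>i<k. s (a i) (x i)) = (\<Sum>i<k. s (b i) (x i))"
      by (intro sum.cong) (auto simp: b_def)
    finally have "(\<Sum>i<k. s (a i) (x' i)) = (\<Sum>i<Suc k. s (b i) (x i))"
      by (simp add: b_def)
    then have bm: "\<forall>i<Suc k. b i \<in> mm" using aI Suc.prems(2) unfolding indep_def by metis
    show "\<forall>i<k. a i \<in> mm"
    proof (intro allI impI)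
      fix i assume "i < k"
      then have "b i \<in> mm" using bm by simp
      then show "a i \<in> mm" using \<open>i < k\<close> unfolding b_def by simp
    qed
  qed
  obtain e' f' where ef': "dualp k e' f' (span S)" "\<forall>j<k. e' j \<in> span (x' ` {..<k})"
    using Suc.IH[OF x'N x'ind] by blast
  have f'E: "\<And>i. i < k \<Longrightarrow> f' i \<in> E" using ef'(1) unfolding dualp_def by blast
  have e'N: "\<And>j. j < k \<Longrightarrow> e' j \<in> span S" using ef'(1) unfolding dualp_def by blast
  have "x' ` {..<k} \<subseteq> {y. g y = 0}"
    unfolding x'_def using gxk by (auto simp: hom_diff[OF gh] hom_scale[OF gh])
  then have "span (x' ` {..<k}) \<subseteq> {y. g y = 0}"
    by (intro span_minimal module_hom.subspace_kernel[OF gh])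
  then have ge': "\<And>j. j < k \<Longrightarrow> g (e' j) = 0" using ef'(2) by blast
  define ek where "ek = x k - (\<Sum>j<k. s (f' j (x k)) (e' j))"
  define e where "e = e'(k := ek)"
  define f where "f = f'(k := g)"
  have fek: "\<And>i. i < k \<Longrightarrow> f' i ek = 0"
  proof -
    fix i assume i: "i < k"
    have "f' i ek = f' i (x k) - f' i (\<Sum>j<k. s (f' j (x k)) (e' j))"
      unfolding ek_def by (rule hom_diff[OF E_hom[OF f'E[OF i]]])
    also have "f' i (\<Sum>j<k. s (f' j (x k)) (e' j)) = f' i (x k)"
      by (rule dual_sum[OF ef'(1) i])
    finally show "f' i ek = 0" by simp
  qed
  have gek: "g ek = 1"
  proof -
    have "g ek = g (x k) - g (\<Sum>j<k. s (f' j (x k)) (e' j))"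
      unfolding ek_def by (rule hom_diff[OF gh])
    also have "g (\<Sum>j<k. s (f' j (x k)) (e' j)) = (\<Sum>j<k. f' j (x k) * g (e' j))"
      by (rule hom_sum_scale[OF gh])
    also have "\<dots> = 0" using ge' by simp
    finally show ?thesis using gxk by simp
  qed
  have ekN: "ek \<in> span S" unfolding ek_def
    using xN[of k] e'N by (auto intro!: span_diff span_sum span_scale)
  have "dualp (Suc k) e f (span S)" unfolding dualp_def
  proof (intro conjI allI impI)
    fix j assume "j < Suc k" then show "e j \<in> span S"
      unfolding e_def using ekN e'N by (auto simp: less_Suc_eq)
  next
    fix i assume "i < Suc k" then show "f i \<in> E"
      unfolding f_def using gE f'E by (auto simp: less_Suc_eq)
  next
    fix i j assume ij: "i < Suc k" "j < Suc k"
    show "f i (e j) = (if i = j then 1 else 0)"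
    proof (cases "i = k")
      case True
      then show ?thesis using ij ge' gek unfolding e_def f_def by (auto simp: less_Suc_eq)
    next
      case False
      then have ik: "i < k" using ij by simp
      show ?thesis
      proof (cases "j = k")
        case True then show ?thesis using ik fek unfolding e_def f_def by auto
      next
        case False then have "j < k" using ij by simp
        then show ?thesis using ik ef'(1) \<open>i \<noteq> k\<close> False unfolding e_def f_def dualp_def by simp
      qed
    qed
  qed
  moreover have "\<forall>j<Suc k. e j \<in> span (x ` {..<Suc k})"
  proof -
    have xs: "\<And>i. i < Suc k \<Longrightarrow> x i \<in> span (x ` {..<Suc k})" by (intro span_base) auto
    have "x' ` {..<k} \<subseteq> span (x ` {..<Suc k})" unfolding x'_def
      using xs by (auto intro!: span_diff span_scale)
    then have sp: "span (x' ` {..<k}) \<subseteq> span (x ` {..<Suc k})" by (intro span_minimal) auto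
    then have e'sp: "\<And>j. j < k \<Longrightarrow> e' j \<in> span (x ` {..<Suc k})" using ef'(2) by blast
    have "ek \<in> span (x ` {..<Suc k})" unfolding ek_def
      using xs[of k] e'sp by (auto intro!: span_diff span_sum span_scale)
    then show ?thesis unfolding e_def using e'sp by (auto simp: less_Suc_eq)
  qed
  ultimately show ?case by blast
qed

end


context lrmod begin

lemma L5:
  assumes c0: "c 0 = IE" and ck: "c k = span S" and cs: "\<forall>i\<le>k. subspace (c i)"
    and cstr: "\<forall>i<k. c i \<subset> c (Suc i)"
  shows "\<exists>x. (\<forall>i<k. x i \<in> span S) \<and> indep k x"
proof -
  have mono: "\<And>i j. i \<le> j \<Longrightarrow> j \<le> k \<Longrightarrow> c i \<subseteq> c j"
  proof -
    fix i j show "i \<le> j \<Longrightarrow> j \<le> k \<Longrightarrow> c i \<subseteq> c j"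
    proof (induction j)
      case 0 then show ?case by simp
    next
      case (Suc j)
      show ?case
      proof (cases "i = Suc j")
        case True then show ?thesis by simp
      next
        case False
        then have "i \<le> j" "j < k" using Suc.prems by auto
        then have "c i \<subseteq> c j" using Suc.IH by simp
        moreover have "c j \<subseteq> c (Suc j)" using cstr \<open>j < k\<close> by blast
        ultimately show ?thesis by blast
      qed
    qed
  qed
  have "\<forall>i. \<exists>y. i < k \<longrightarrow> y \<in> c (Suc i) \<and> y \<notin> c i"
  proof
    fix i show "\<exists>y. i < k \<longrightarrow> y \<in> c (Suc i) \<and> y \<notin> c i"
    proof (cases "i < k")
      case True
      then have "c i \<subset> c (Suc i)" using cstr by simp
      then obtain y where "y \<in> c (Suc i) - c i" using psubset_imp_ex_mem by metis
      then show ?thesis by blast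
    next
      case False then show ?thesis by simp
    qed
  qed
  from choice[OF this] obtain x where x0: "\<forall>i. i < k \<longrightarrow> x i \<in> c (Suc i) \<and> x i \<notin> c i" by (elim exE)
  have x: "\<And>i. i < k \<Longrightarrow> x i \<in> c (Suc i) \<and> x i \<notin> c i" using x0 by simp
  have xN: "\<And>i. i < k \<Longrightarrow> x i \<in> span S"
  proof -
    fix i assume i: "i < k"
    have "c (Suc i) \<subseteq> c k" using i by (intro mono) auto
    then show "x i \<in> span S" using x[OF i] ck by auto
  qed
  have "indep k x" unfolding indep_def
  proof (rule allI, rule impI)
    fix a assume aI: "(\<Sum>i<k. s (a i) (x i)) \<in> IE"
    define P where "P = (\<lambda>j. (\<Sum>i<j. s (a i) (x i)) \<in> IE \<and> (\<forall>i. j \<le> i \<and> i < k \<longrightarrow> a i \<in> mm))"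
    have "P 0"
    proof (rule inc_induct[of 0 k P])
      show "P k" unfolding P_def using aI by auto
    next
      fix n assume n: "0 \<le> n" "n < k" and Pn: "P (Suc n)"
      have s1: "(\<Sum>i<Suc n. s (a i) (x i)) \<in> c n"
        using Pn c0 mono[of 0 n] n unfolding P_def by auto
      have s2: "(\<Sum>i<n. s (a i) (x i)) \<in> c n"
      proof (rule subspace_sum)
        show "subspace (c n)" using cs n by simp
      next
        fix i assume "i \<in> {..<n}"
        then have "x i \<in> c n" using x[of i] mono[of "Suc i" n] n by auto
        then show "s (a i) (x i) \<in> c n" using subspace_scale cs n by simp
      qed
      have "s (a n) (x n) = (\<Sum>i<Suc n. s (a i) (x i)) - (\<Sum>i<n. s (a i) (x i))" by simp
      moreover have csn: "subspace (c n)" using cs n by simp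
      ultimately have axn: "s (a n) (x n) \<in> c n" using s1 s2 subspace_diff by metis
      have an: "a n \<in> mm"
      proof (rule ccontr)
        assume "a n \<notin> mm"
        then obtain v where v: "a n * v = 1" using unit by blast
        have "s v (s (a n) (x n)) \<in> c n" using subspace_scale[OF csn axn] .
        moreover have "s v (s (a n) (x n)) = x n" using v by (simp add: mult.commute)
        ultimately show False using x n by auto
      qed
      have "s (a n) (x n) \<in> IE" using mmN[OF an xN] n by simp
      moreover have "(\<Sum>i<Suc n. s (a i) (x i)) \<in> IE" using Pn unfolding P_def by simp
      ultimately have "(\<Sum>i<Suc n. s (a i) (x i)) - s (a n) (x n) \<in> IE"
        using IE_sub subspace_diff by blast
      then have "(\<Sum>i<n. s (a i) (x i)) \<in> IE" by simp
      moreover have "\<forall>i. n \<le> i \<and> i < k \<longrightarrow> a i \<in> mm"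
      proof (intro allI impI)
        fix i assume "n \<le> i \<and> i < k"
        then show "a i \<in> mm"
        proof (cases "i = n")
          case True then show ?thesis using an by simp
        next
          case False then show ?thesis using Pn \<open>n \<le> i \<and> i < k\<close> unfolding P_def by auto
        qed
      qed
      ultimately show "P n" unfolding P_def by blast
    qed simp
    then show "\<forall>i<k. a i \<in> mm" unfolding P_def by simp
  qed
  then show ?thesis using xN by blast
qed

lemma L6:
  assumes d: "dualp n e f (span S)"
  shows "\<exists>k. n \<le> k \<and> (\<exists>c. c 0 = IE \<and> c k = span S \<and> (\<forall>i\<le>k. subspace (c i)) \<and>
           (\<forall>i<k. c i \<subset> c (Suc i)))"
proof -
  define C where "C = (\<lambda>i. span (IE \<union> e ` {..<i}))"
  define c where "c = (\<lambda>i. if i \<le> n then C i else span S)"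
  have eN: "\<And>j. j < n \<Longrightarrow> e j \<in> span S" using d unfolding dualp_def by blast
  have CN: "\<And>i. i \<le> n \<Longrightarrow> C i \<subseteq> span S" unfolding C_def
    using IE_N eN by (intro span_minimal) auto
  have c0: "c 0 = IE" unfolding c_def C_def using IE_sub by simp
  have cs: "\<And>i. subspace (c i)" unfolding c_def C_def by simp
  have strict: "\<And>i. i < n \<Longrightarrow> c i \<subset> c (Suc i)"
  proof -
    fix i assume i: "i < n"
    have sub: "C i \<subseteq> C (Suc i)" unfolding C_def by (intro span_mono) auto
    have ei: "e i \<in> C (Suc i)" unfolding C_def by (intro span_base) auto
    have fh: "module_hom s (*) (f i)" using d i E_hom unfolding dualp_def by blast
    have "IE \<union> e ` {..<i} \<subseteq> {x. f i x \<in> mm}"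
    proof
      fix y assume "y \<in> IE \<union> e ` {..<i}"
      then show "y \<in> {x. f i x \<in> mm}"
      proof
        assume "y \<in> IE" then show ?thesis using d i unfolding memIE dualp_def by auto
      next
        assume "y \<in> e ` {..<i}"
        then obtain j where j: "j < i" "y = e j" by blast
        then have "f i y = 0" using d i unfolding dualp_def by auto
        then show ?thesis using mm_zero by simp
      qed
    qed
    then have "C i \<subseteq> {x. f i x \<in> mm}" unfolding C_def
      by (intro span_minimal hom_mm_subspace[OF fh])
    moreover have "f i (e i) = 1" using d i unfolding dualp_def by auto
    ultimately have "e i \<notin> C i" using one_notin by auto
    then have "C i \<subset> C (Suc i)" using sub ei by blast
    then show "c i \<subset> c (Suc i)" unfolding c_def using i by simp
  qed
  show ?thesis
  proof (cases "C n = span S")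
    case True
    have "c n = span S" unfolding c_def using True by simp
    then show ?thesis
      apply (intro exI[of _ n] conjI order.refl exI[of _ c])
      using c0 cs strict by simp_all
  next
    case False
    have "c (Suc n) = span S" unfolding c_def by simp
    moreover have "\<forall>i<Suc n. c i \<subset> c (Suc i)"
    proof (intro allI impI)
      fix i assume "i < Suc n"
      then consider "i < n" | "i = n" by linarith
      then show "c i \<subset> c (Suc i)"
      proof cases
        case 1 then show ?thesis using strict by blast
      next
        case 2 then show ?thesis unfolding c_def using CN[of n] False by auto
      qed
    qed
    ultimately show ?thesis
      apply (intro exI[of _ "Suc n"] conjI le_SucI order.refl exI[of _ c])
      using c0 cs by simp_all
  qed
qed

end



theorem lemma4p6:
  fixes s :: "'r::comm_ring_1 \<Rightarrow> 'm::ab_group_add \<Rightarrow> 'm"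
    and mm :: "'r set" and S :: "'m set" and E :: "('m \<Rightarrow> 'r) set"
  assumes "noetherian_local_ring mm"
    and "module s"
    and "fin_gen_module s"
    and "dual_submodule s E"
  shows "enat (delta_E s E S) = quot_length s (module.span s S) (I_E s mm E S)"
proof -
  interpret L: lrmod mm s E S
    by (intro lrmod.intro lring.intro lrmod_axioms.intro) (use assms in simp_all)
  obtain A where A: "finite A" "L.span A = UNIV" using assms(3) unfolding fin_gen_module_def by blast
  define D where "D = (\<lambda>n. \<exists>F. free_E_summand s E F n \<and> F \<subseteq> L.span S)"
  have bound: "\<And>n. D n \<Longrightarrow> n \<le> card A"
  proof -
    fix n assume "D n"
    then obtain F where F: "free_E_summand s E F n" unfolding D_def by blast
    obtain e f where ef: "L.dualp n e f F" using L.L2[OF F] by blast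
    show "n \<le> card A"
    proof (rule L.L3[OF A(1)])
      show "\<forall>j<n. e j \<in> L.span A" using A(2) by simp
      show "\<forall>i<n. module_hom s (*) (f i)" using ef L.E_hom unfolding L.dualp_def by blast
      show "\<forall>i<n. \<forall>j<n. f i (e j) = (if i = j then 1 else 0)" using ef unfolding L.dualp_def by blast
    qed
  qed
  have D0: "D 0"
  proof -
    have "L.dualp 0 (\<lambda>_. 0) (\<lambda>_. \<lambda>_. 0) UNIV" unfolding L.dualp_def by simp
    from L.L1[OF this] have "free_E_summand s E (L.span {}) 0" by simp
    moreover have "L.span {} \<subseteq> L.span S" using L.span_zero by simp
    ultimately show ?thesis unfolding D_def by blast
  qed
  have delta: "delta_E s E S = Greatest D" unfolding delta_E_def D_def by simp
  have Dd: "D (delta_E s E S)" unfolding delta using GreatestI_nat[of D 0 "card A", OF D0 bound] .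
  have Dle: "\<And>n. D n \<Longrightarrow> n \<le> delta_E s E S" unfolding delta using Greatest_le_nat[of D _ "card A"] bound by blast
  define K where "K = {k. \<exists>c :: nat \<Rightarrow> 'm set. c 0 = I_E s mm E S \<and> c k = L.span S \<and>
       (\<forall>i\<le>k. L.subspace (c i)) \<and> (\<forall>i<k. c i \<subset> c (Suc i))}"
  have ql: "quot_length s (L.span S) (I_E s mm E S) = (SUP k \<in> K. enat k)"
    unfolding quot_length_def K_def by simp
  show ?thesis unfolding ql
  proof (rule antisym)
    obtain F where F: "free_E_summand s E F (delta_E s E S)" "F \<subseteq> L.span S"
      using Dd unfolding D_def by blast
    obtain e f where "L.dualp (delta_E s E S) e f F" using L.L2[OF F(1)] by blast
    then have "L.dualp (delta_E s E S) e f (L.span S)" using F(2) unfolding L.dualp_def by blast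
    from L.L6[OF this] obtain k where k: "delta_E s E S \<le> k" "k \<in> K" unfolding K_def by blast
    have "enat (delta_E s E S) \<le> enat k" using k(1) by simp
    also have "\<dots> \<le> (SUP k \<in> K. enat k)" using k(2) by (rule SUP_upper)
    finally show "enat (delta_E s E S) \<le> (SUP k \<in> K. enat k)" .
  next
    show "(SUP k \<in> K. enat k) \<le> enat (delta_E s E S)"
    proof (rule SUP_least)
      fix k assume "k \<in> K"
      then obtain c where c: "c 0 = I_E s mm E S" "c k = L.span S"
        "\<forall>i\<le>k. L.subspace (c i)" "\<forall>i<k. c i \<subset> c (Suc i)" unfolding K_def by blast
      obtain x where x: "\<forall>i<k. x i \<in> L.span S" "L.indep k x" using L.L5[OF c] by blast
      obtain e f where ef: "L.dualp k e f (L.span S)" using L.L4[OF x] by blast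
      have "free_E_summand s E (L.span (e ` {..<k})) k" by (rule L.L1[OF ef])
      moreover have "L.span (e ` {..<k}) \<subseteq> L.span S"
        using ef unfolding L.dualp_def by (intro L.span_minimal) auto
      ultimately have "D k" unfolding D_def by blast
      then show "enat k \<le> enat (delta_E s E S)" using Dle by simp
    qed
  qed
qed


end
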